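(* Let $(V,Q)$ be a Lorentz space, $T\in PO(Q)$, and let $W\subseteq V_t$ be a minimal $T$-invariant time-like subspace of $V_t$ (time-like: contains $v$ with $Q(v)<0$; minimal among $T$-invariant time-like subspaces). Then exactly one of the following holds: (i) $V_t=V_1$, $\dim W=1$, and $W$ is spanned by a time-like eigenvector of eigenvalue $1$; (ii) $V_t=V_1$, $\dim W\ge2$, and $\ker(T|_W-I)$ is spanned by a single light-like ($Q(v)=0$, $v\ne0$) eigenvector; (iii) $V_t=V_\lambda\oplus V_{\lambda^{-1}}$ with $\lambda\neq1$ real positive, $\dim W=2$, and $W$ is spanned by two light-like eigenvectors with eigenvalues $\lambda$ and $\lambda^{-1}$.
   Context: Lorentz space: real finite-dimensional $V$ with nondegenerate symmetric bilinear $Q$ of signature $(1,n)$; $PO(Q)$: isometries of $Q$ preserving each component of the time-like cone $\{Q(v)<0\}$. Space-time decomposition: $V_s$ is the sum of the real primary components of $T$ (spaces $\ker p(T)^{\dim V}$, $p$ irreducible factor of the characteristic polynomial) on which $Q$ is positive definite, and $V_t$ the sum of the other primary components. $V_\mu=\ker(T-\mu)^{\dim V}$. *)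

theory Defs
  imports "HOL-Analysis.Analysis" "HOL-Computational_Algebra.Polynomial"
    "HOL-Computational_Algebra.Factorial_Ring"
begin

text \<open>The Lorentz space V is modelled as real^'n (dim V = CARD('n)); the quadratic
  form Q is given by its symmetric bilinear form B, with Q(v) = B v v.\<close>

definition lorentz_form :: "(real^'n \<Rightarrow> real^'n \<Rightarrow> real) \<Rightarrow> bool" where
  "lorentz_form B \<longleftrightarrow>
     bilinear B \<and> (\<forall>x y. B x y = B y x) \<and>
     (\<forall>x. (\<forall>y. B x y = 0) \<longrightarrow> x = 0) \<and>
     (\<exists>S. independent S \<and> span S = UNIV \<and> pairwise (\<lambda>u v. B u v = 0) S \<and>
          (\<forall>u\<in>S. B u u \<noteq> 0) \<and> card {u\<in>S. B u u < 0} = 1)"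

definition time_cone :: "(real^'n \<Rightarrow> real^'n \<Rightarrow> real) \<Rightarrow> (real^'n) set" where
  "time_cone B = {v. B v v < 0}"

definition PO :: "(real^'n \<Rightarrow> real^'n \<Rightarrow> real) \<Rightarrow> (real^'n \<Rightarrow> real^'n) set" where
  "PO B = {T. linear T \<and> bij T \<and> (\<forall>x y. B (T x) (T y) = B x y) \<and>
              (\<forall>v\<in>time_cone B. T v \<in> connected_component_set (time_cone B) v)}"

definition time_like :: "(real^'n \<Rightarrow> real^'n \<Rightarrow> real) \<Rightarrow> (real^'n) set \<Rightarrow> bool" where
  "time_like B W \<longleftrightarrow> (\<exists>v\<in>W. B v v < 0)"

definition light_like :: "(real^'n \<Rightarrow> real^'n \<Rightarrow> real) \<Rightarrow> real^'n \<Rightarrow> bool" where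
  "light_like B v \<longleftrightarrow> v \<noteq> 0 \<and> B v v = 0"

definition charpoly :: "(real^'n \<Rightarrow> real^'n) \<Rightarrow> real poly" where
  "charpoly T = det (\<chi> i j. (if i = j then [:0, 1:] else 0) - [: matrix T $ i $ j :])"

definition poly_map :: "real poly \<Rightarrow> (real^'n \<Rightarrow> real^'n) \<Rightarrow> real^'n \<Rightarrow> real^'n" where
  "poly_map p T = (\<lambda>v. \<Sum>i\<le>degree p. coeff p i *\<^sub>R (T ^^ i) v)"

definition primary_comp :: "(real^'n \<Rightarrow> real^'n) \<Rightarrow> real poly \<Rightarrow> (real^'n) set" where
  "primary_comp T p = {v. (poly_map p T ^^ CARD('n)) v = 0}"

definition gen_eigenspace :: "(real^'n \<Rightarrow> real^'n) \<Rightarrow> real \<Rightarrow> (real^'n) set" where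
  "gen_eigenspace T \<mu> = {v. ((\<lambda>w. T w - \<mu> *\<^sub>R w) ^^ CARD('n)) v = 0}"

definition space_part :: "(real^'n \<Rightarrow> real^'n \<Rightarrow> real) \<Rightarrow> (real^'n \<Rightarrow> real^'n) \<Rightarrow> (real^'n) set" where
  "space_part B T = span (\<Union> {primary_comp T p | p. irreducible p \<and> p dvd charpoly T \<and>
       (\<forall>v\<in>primary_comp T p. v \<noteq> 0 \<longrightarrow> B v v > 0)})"

definition time_part :: "(real^'n \<Rightarrow> real^'n \<Rightarrow> real) \<Rightarrow> (real^'n \<Rightarrow> real^'n) \<Rightarrow> (real^'n) set" where
  "time_part B T = span (\<Union> {primary_comp T p | p. irreducible p \<and> p dvd charpoly T \<and>
       \<not> (\<forall>v\<in>primary_comp T p. v \<noteq> 0 \<longrightarrow> B v v > 0)})"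

end

theory Submission imports Defs begin

lemma lin_irr: "irreducible [:a, 1::real:]"
proof (rule irreducibleI)
  fix p q assume pq: "[:a,1::real:] = p * q"
  have "p \<noteq> 0" "q \<noteq> 0" using pq by auto
  then have "degree (p * q) = degree p + degree q" by (intro degree_mult_eq) auto
  moreover have "degree [:a,1::real:] = 1" by simp
  ultimately have "degree p + degree q = 1" using pq by simp
  then have "degree p = 0 \<or> degree q = 0" by arith
  with pq \<open>p \<noteq> 0\<close> \<open>q \<noteq> 0\<close> show "p dvd 1 \<or> q dvd 1"
    by (auto simp: is_unit_poly_iff dvd_field_iff elim!: degree_eq_zeroE)
qed (auto simp: is_unit_poly_iff)

lemma irr_root:
  assumes "irreducible p" "poly p (m::real) = 0"
  shows "\<exists>c. c \<noteq> 0 \<and> p = smult c [:-m, 1:]"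
proof -
  obtain q where q: "p = [:-m,1:] * q" using assms(2) poly_eq_0_iff_dvd by (metis dvdE)
  from irreducibleD[OF assms(1) q] have "[:-m,1:] dvd 1 \<or> q dvd 1" .
  moreover have "\<not> [:-m,1::real:] dvd 1" by (simp add: is_unit_poly_iff)
  ultimately have "q dvd 1" by blast
  then obtain c where c: "q = [:c:]" "c dvd 1" using is_unit_poly_iff by blast
  then have "c \<noteq> 0" by auto
  moreover have "p = smult c [:-m,1:]" using q c by simp
  ultimately show ?thesis by blast
qed

lemma poly_det: "poly (det M) x = det (\<chi> i j. poly (M$i$j) x)"
  unfolding det_def by (simp add: poly_sum poly_prod)

lemma charpoly_root:
  fixes T :: "real^'n \<Rightarrow> real^'n"
  assumes "linear T" "T v = m *\<^sub>R v" "v \<noteq> 0"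
  shows "[:-m, 1:] dvd charpoly T"
proof -
  define f where "f = (\<lambda>x. m *\<^sub>R x - T x)"
  have lf: "linear f" unfolding f_def
    by (rule linearI) (simp_all add: linear_add[OF assms(1)] linear_cmul[OF assms(1)] algebra_simps)
  have "f v = f 0" using assms(2) linear_0[OF assms(1)] unfolding f_def by simp
  then have "\<not> inj f" using assms(3) by (meson injD)
  then have "det (matrix f) = 0" using det_nz_iff_inj[OF lf] by blast
  moreover have "matrix f = (\<chi> i j. poly ((if i = j then [:0, 1:] else 0) - [: matrix T $ i $ j :]) m)"
    unfolding f_def matrix_def using assms(1)
    by (simp add: vec_eq_iff linear_diff[OF assms(1)] axis_def)
  ultimately have "poly (charpoly T) m = 0" unfolding charpoly_def poly_det by simp
  then show ?thesis using poly_eq_0_iff_dvd by blast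
qed


locale lor =
  fixes B :: "real^'n \<Rightarrow> real^'n \<Rightarrow> real"
  assumes lf: "lorentz_form B"
begin

lemma bil: "bilinear B" using lf unfolding lorentz_form_def by blast
lemma Bsym: "B x y = B y x" using lf unfolding lorentz_form_def by blast
lemma nondeg: "x \<noteq> 0 \<Longrightarrow> \<exists>y. B x y \<noteq> 0" using lf unfolding lorentz_form_def by blast

lemma Bladd[simp]: "B (x + y) z = B x z + B y z" using bilinear_ladd[OF bil] .
lemma Bradd[simp]: "B x (y + z) = B x y + B x z" using bilinear_radd[OF bil] .
lemma Blmul[simp]: "B (c *\<^sub>R x) y = c * B x y" using bilinear_lmul[OF bil] by simp
lemma Brmul[simp]: "B x (c *\<^sub>R y) = c * B x y" using bilinear_rmul[OF bil] by simp
lemma Blsub[simp]: "B (x - y) z = B x z - B y z" using bilinear_lsub[OF bil] .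
lemma Brsub[simp]: "B x (y - z) = B x y - B x z" using bilinear_rsub[OF bil] .
lemma Blneg[simp]: "B (- x) y = - B x y" using bilinear_lneg[OF bil] .
lemma Brneg[simp]: "B x (- y) = - B x y" using bilinear_rneg[OF bil] .
lemma Blzero[simp]: "B 0 y = 0" using bilinear_lzero[OF bil] .
lemma Brzero[simp]: "B x 0 = 0" using bilinear_rzero[OF bil] .

lemma linB1: "linear (\<lambda>x. B x y)"
  using bil unfolding bilinear_def by blast

lemma orth_span: assumes "\<And>f. f \<in> F \<Longrightarrow> B f s = 0" "z \<in> span F" shows "B z s = 0"
proof -
  have "(\<lambda>x. B x s) z = 0"
    by (rule linear_eq_0_on_span[OF linB1]) (use assms in auto)
  then show ?thesis by simp
qed

lemma pd_span:
  assumes "finite F" "\<And>s. s \<in> F \<Longrightarrow> B s s > 0"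
    "\<And>s t. s \<in> F \<Longrightarrow> t \<in> F \<Longrightarrow> s \<noteq> t \<Longrightarrow> B s t = 0"
  shows "y \<in> span F \<Longrightarrow> B y y \<ge> 0 \<and> (B y y = 0 \<longrightarrow> y = 0)"
  using assms
proof (induction F arbitrary: y rule: finite_induct)
  case empty
  then show ?case by simp
next
  case (insert s F)
  from insert.prems(1) obtain k where k: "y - k *\<^sub>R s \<in> span F"
    using span_breakdown_eq by blast
  define z where "z = y - k *\<^sub>R s"
  have y: "y = z + k *\<^sub>R s" unfolding z_def by simp
  have zs: "B z s = 0"
    by (rule orth_span[of F]) (use insert k z_def in auto)
  have sz: "B s z = 0" using zs Bsym by metis
  have zF: "z \<in> span F" using k unfolding z_def .
  have IH: "B z z \<ge> 0 \<and> (B z z = 0 \<longrightarrow> z = 0)"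
    using insert.IH[OF zF] insert.prems by auto
  have ss: "B s s > 0" using insert by auto
  have eq: "B y y = B z z + k * k * B s s"
    unfolding y by (simp add: zs sz algebra_simps)
  have "k * k * B s s \<ge> 0" using ss by simp
  moreover have "B y y = 0 \<Longrightarrow> y = 0"
  proof -
    assume "B y y = 0"
    with eq IH \<open>k * k * B s s \<ge> 0\<close> have "B z z = 0" "k * k * B s s = 0" by linarith+
    with IH ss show "y = 0" unfolding y by simp
  qed
  ultimately show ?case using eq IH by simp
qed

lemma signature:
  obtains s0 where "B s0 s0 < 0" "\<And>z. B z s0 = 0 \<Longrightarrow> z = 0 \<or> B z z > 0"
proof -
  obtain S where S: "independent S" "span S = UNIV" "pairwise (\<lambda>u v. B u v = 0) S"
    "\<forall>u\<in>S. B u u \<noteq> 0" "card {u\<in>S. B u u < 0} = 1"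
    using lf unfolding lorentz_form_def by blast
  have fin: "finite S" using S(1) independent_bound_general by blast
  obtain s0 where s0: "{u\<in>S. B u u < 0} = {s0}" using S(5) card_1_singletonE by blast
  have s0S: "s0 \<in> S" "B s0 s0 < 0" using s0 by auto
  define F where "F = S - {s0}"
  have Fpos: "\<And>s. s \<in> F \<Longrightarrow> B s s > 0"
  proof -
    fix s assume "s \<in> F"
    then have "s \<in> S" "s \<noteq> s0" unfolding F_def by auto
    with s0 S(4) show "B s s > 0" by (metis (mono_tags, lifting) mem_Collect_eq
          linorder_neqE_linordered_idom singletonD)
  qed
  have Forth: "\<And>s t. s \<in> F \<Longrightarrow> t \<in> F \<Longrightarrow> s \<noteq> t \<Longrightarrow> B s t = 0"
    using S(3) unfolding F_def pairwise_def by auto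
  have "\<And>z. B z s0 = 0 \<Longrightarrow> z = 0 \<or> B z z > 0"
  proof -
    fix z assume z: "B z s0 = 0"
    have "z \<in> span (insert s0 F)" using S(2) s0S unfolding F_def
      by (metis UNIV_I insert_Diff)
    then obtain k where k: "z - k *\<^sub>R s0 \<in> span F" using span_breakdown_eq by blast
    have "B (z - k *\<^sub>R s0) s0 = 0"
      by (rule orth_span[OF _ k]) (use S(3) s0S in \<open>auto simp: F_def pairwise_def\<close>)
    then have "k * B s0 s0 = 0" using z by simp
    then have "k = 0" using s0S by simp
    then have "z \<in> span F" using k by simp
    from pd_span[OF _ Fpos Forth this] fin show "z = 0 \<or> B z z > 0"
      unfolding F_def by force
  qed
  with s0S that show ?thesis by blast
qed

lemma L1:
  assumes e: "B e e < 0" and ye: "B y e = 0"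
  shows "y = 0 \<or> B y y > 0"
proof (rule ccontr)
  assume "\<not> ?thesis"
  then have y0: "y \<noteq> 0" and yy: "B y y \<le> 0" by auto
  obtain s0 where s0: "B s0 s0 < 0" "\<And>z. B z s0 = 0 \<Longrightarrow> z = 0 \<or> B z z > 0"
    using signature by blast
  have e0: "e \<noteq> 0" using e by auto
  define a where "a = B y s0"
  define b where "b = - B e s0"
  have ab: "a \<noteq> 0 \<or> b \<noteq> 0"
  proof (rule ccontr)
    assume "\<not> ?thesis"
    then have "B e s0 = 0" unfolding b_def by simp
    from s0(2)[OF this] e show False by auto
  qed
  define z where "z = a *\<^sub>R e + b *\<^sub>R y"
  have ey: "B e y = 0" using ye Bsym by metis
  have "B z s0 = 0" unfolding z_def a_def b_def by (simp add: algebra_simps)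
  from s0(2)[OF this] have "z = 0 \<or> B z z > 0" .
  moreover have "B z z = a * a * B e e + b * b * B y y"
    unfolding z_def by (simp add: ye ey algebra_simps)
  moreover have "a * a * B e e \<le> 0" using e by (simp add: mult_nonneg_nonpos)
  moreover have "b * b * B y y \<le> 0" using yy by (simp add: mult_nonneg_nonpos)
  ultimately have z0: "z = 0" by linarith
  then have "B z e = 0" by simp
  then have "a * B e e = 0" unfolding z_def by (simp add: ye)
  then have "a = 0" using e by simp
  with z0 have "b *\<^sub>R y = 0" unfolding z_def by simp
  with y0 have "b = 0" by simp
  with \<open>a = 0\<close> ab show False by simp
qed

lemma timelike_exists: obtains e where "B e e < 0"
  using signature by blast

lemma L2:
  assumes "B v v = 0" "B w w = 0" "B v w = 0" "w \<noteq> 0"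
  shows "\<exists>c. v = c *\<^sub>R w"
proof -
  obtain s0 where s0: "B s0 s0 < 0" using timelike_exists by blast
  define a where "a = B v s0"
  define b where "b = B w s0"
  have b0: "b \<noteq> 0"
  proof
    assume "b = 0"
    then have "B w s0 = 0" unfolding b_def .
    from L1[OF s0 this] assms show False by auto
  qed
  define z where "z = b *\<^sub>R v - a *\<^sub>R w"
  have wv: "B w v = 0" using assms Bsym by metis
  have "B z s0 = 0" unfolding z_def a_def b_def by (simp add: algebra_simps)
  moreover have "B z z = 0" unfolding z_def using assms wv by (simp add: algebra_simps)
  ultimately have "z = 0" using L1[OF s0] by fastforce
  then have "b *\<^sub>R v = a *\<^sub>R w" unfolding z_def by simp
  then have "v = (a / b) *\<^sub>R w" using b0
    by (metis (no_types, lifting) divide_inverse_commute inverse_eq_divide scaleR_scaleR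
        right_inverse scaleR_one mult.commute)
  then show ?thesis by blast
qed

lemma L5:
  assumes x0: "x \<noteq> 0" and xx: "B x x \<le> 0" and yx: "B y x = 0" and yy: "B y y \<le> 0"
  shows "\<exists>c. y = c *\<^sub>R x"
proof (cases "B x x < 0")
  case True
  from L1[OF True yx] yy have "y = 0" by auto
  then show ?thesis by (intro exI[of _ 0]) simp
next
  case False
  then have xx0: "B x x = 0" using xx by simp
  have yy0: "B y y = 0"
  proof (rule ccontr)
    assume "B y y \<noteq> 0"
    then have "B y y < 0" using yy by simp
    from L1[OF this] yx Bsym x0 xx0 show False by (metis less_irrefl)
  qed
  from L2[OF yy0 xx0 yx x0] show ?thesis .
qed

end

lemma lin_funpow: "linear (f::'a::real_vector\<Rightarrow>'a) \<Longrightarrow> linear (f ^^ k)"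
proof (induction k)
  case 0 show ?case by (simp add: linearI)
next
  case (Suc k)
  have "f ^^ Suc k = f \<circ> f ^^ k" by simp
  then show ?case using Suc linear_compose by metis
qed

lemma subspace_ker: "linear (f::'a::real_vector\<Rightarrow>'b::real_vector) \<Longrightarrow> subspace {v. f v = 0}"
  unfolding subspace_def by (auto simp: linear_0 linear_add linear_cmul)

locale lorT = lor B for B :: "real^'n \<Rightarrow> real^'n \<Rightarrow> real" +
  fixes T :: "real^'n \<Rightarrow> real^'n"
  assumes TPO: "T \<in> PO B"
begin

lemma linT: "linear T" using TPO unfolding PO_def by blast
lemma injT: "inj T" using TPO unfolding PO_def bij_def by blast
lemma iso[simp]: "B (T x) (T y) = B x y" using TPO unfolding PO_def by blast
lemma orient: "v \<in> time_cone B \<Longrightarrow> T v \<in> connected_component_set (time_cone B) v"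
  using TPO unfolding PO_def by blast

lemma Tadd[simp]: "T (x + y) = T x + T y" using linear_add[OF linT] .
lemma Tsub[simp]: "T (x - y) = T x - T y" using linear_diff[OF linT] .
lemma Tmul[simp]: "T (c *\<^sub>R x) = c *\<^sub>R T x" using linear_cmul[OF linT] .
lemma Tzero[simp]: "T 0 = 0" using linear_0[OF linT] .

lemma lin_g: "linear (\<lambda>w. T w - m *\<^sub>R w)"
  by (rule linearI) (simp_all add: algebra_simps)

lemma lin_gk: "linear ((\<lambda>w. T w - m *\<^sub>R w) ^^ k)"
  using lin_funpow[OF lin_g] .

lemma subspace_gen: "subspace (gen_eigenspace T m)"
  unfolding gen_eigenspace_def using subspace_ker[OF lin_gk] .

lemma pair_T:
  assumes "T v = a *\<^sub>R v" "a \<noteq> 0"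
  shows "B (T y) v = inverse a * B y v"
proof -
  have "v = T (inverse a *\<^sub>R v)" using assms by simp
  then have "B (T y) v = B (T y) (T (inverse a *\<^sub>R v))" by simp
  also have "\<dots> = inverse a * B y v" by simp
  finally show ?thesis .
qed

lemma pair_g:
  assumes "T v = a *\<^sub>R v" "a \<noteq> 0"
  shows "B (((\<lambda>w. T w - m *\<^sub>R w) ^^ k) y) v = (inverse a - m) ^ k * B y v"
  by (induction k) (simp_all add: pair_T[OF assms] algebra_simps)

lemma pair_Tpow:
  assumes "T v = a *\<^sub>R v" "a \<noteq> 0"
  shows "B ((T ^^ i) y) v = (inverse a) ^ i * B y v"
  by (induction i) (simp_all add: pair_T[OF assms] algebra_simps)

lemma pair_pm1:
  assumes "T v = a *\<^sub>R v" "a \<noteq> 0"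
  shows "B (poly_map p T y) v = poly p (inverse a) * B y v"
proof -
  have "B (poly_map p T y) v = (\<Sum>i\<le>degree p. B (coeff p i *\<^sub>R (T ^^ i) y) v)"
    unfolding poly_map_def using linear_sum[OF linB1, of "\<lambda>i. coeff p i *\<^sub>R (T ^^ i) y" "{..degree p}" v]
    by simp
  also have "\<dots> = (\<Sum>i\<le>degree p. coeff p i * (inverse a) ^ i) * B y v"
    by (simp add: pair_Tpow[OF assms] sum_distrib_right mult.assoc)
  also have "\<dots> = poly p (inverse a) * B y v" by (simp add: poly_altdef)
  finally show ?thesis .
qed

lemma pair_pm:
  assumes "T v = a *\<^sub>R v" "a \<noteq> 0"
  shows "B ((poly_map p T ^^ k) y) v = (poly p (inverse a)) ^ k * B y v"
  by (induction k) (simp_all add: pair_pm1[OF assms] algebra_simps)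

lemma act_g:
  assumes "T x = m *\<^sub>R x"
  shows "((\<lambda>w. T w - c *\<^sub>R w) ^^ k) x = (m - c) ^ k *\<^sub>R x"
  by (induction k) (simp_all add: assms algebra_simps)

lemma act_Tpow:
  assumes "T x = m *\<^sub>R x"
  shows "(T ^^ i) x = m ^ i *\<^sub>R x"
  by (induction i) (simp_all add: assms algebra_simps)

lemma act_pm1:
  assumes "T x = m *\<^sub>R x"
  shows "poly_map p T x = poly p m *\<^sub>R x"
  unfolding poly_map_def poly_altdef
  by (simp add: act_Tpow[OF assms] scaleR_sum_left)

lemma act_pm:
  assumes "T x = m *\<^sub>R x"
  shows "(poly_map p T ^^ k) x = (poly p m) ^ k *\<^sub>R x"
proof (induction k)
  case 0 then show ?case by simp
next
  case (Suc k)
  have "(poly_map p T ^^ Suc k) x = poly_map p T ((poly p m) ^ k *\<^sub>R x)" using Suc by simp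
  also have "\<dots> = (poly p m) ^ k *\<^sub>R poly_map p T x"
    unfolding poly_map_def by (simp add: scaleR_sum_right linear_cmul[OF lin_funpow[OF linT]] mult.commute)
  also have "\<dots> = (poly p m) ^ Suc k *\<^sub>R x" by (simp add: act_pm1[OF assms])
  finally show ?case .
qed

lemma pm_lin:
  assumes "c \<noteq> 0"
  shows "poly_map (smult c [:-m, 1:]) T = (\<lambda>w. c *\<^sub>R (T w - m *\<^sub>R w))"
  using assms unfolding poly_map_def by (auto simp: algebra_simps)

lemma comp_eq:
  assumes "c \<noteq> 0"
  shows "primary_comp T (smult c [:-m, 1:]) = gen_eigenspace T m"
proof -
  have pw: "((\<lambda>w. c *\<^sub>R (T w - m *\<^sub>R w)) ^^ k) w = c ^ k *\<^sub>R ((\<lambda>w. T w - m *\<^sub>R w) ^^ k) w" for k w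
    by (induction k) (simp_all add: algebra_simps)
  show ?thesis unfolding primary_comp_def gen_eigenspace_def pm_lin[OF assms] pw
    using assms by simp
qed

end

context lorT begin

abbreviation "TU \<equiv> \<Union> {primary_comp T p | p. irreducible p \<and> p dvd charpoly T \<and>
       \<not> (\<forall>v\<in>primary_comp T p. v \<noteq> 0 \<longrightarrow> B v v > 0)}"

lemma tp_def': "time_part B T = span TU"
  unfolding time_part_def ..

lemma TU_E:
  assumes "y \<in> TU"
  obtains p where "irreducible p" "y \<in> primary_comp T p"
      "\<not> (\<forall>v\<in>primary_comp T p. v \<noteq> 0 \<longrightarrow> B v v > 0)"
proof -
  from assms obtain P where P: "P \<in> {primary_comp T p | p. irreducible p \<and> p dvd charpoly T \<and>
       \<not> (\<forall>v\<in>primary_comp T p. v \<noteq> 0 \<longrightarrow> B v v > 0)}" "y \<in> P" by (rule UnionE)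
  from P(1) obtain p where "P = primary_comp T p" "irreducible p"
      "\<not> (\<forall>v\<in>primary_comp T p. v \<noteq> 0 \<longrightarrow> B v v > 0)" by blast
  with P(2) that show ?thesis by blast
qed

lemma cardpos: "CARD('n) > 0" by simp

lemma eig_in_gen:
  assumes "T x = m *\<^sub>R x"
  shows "x \<in> gen_eigenspace T m"
  unfolding gen_eigenspace_def using act_g[OF assms, where c=m and k="CARD('n)"] cardpos by simp

lemma comp_in_TU:
  assumes "T x = m *\<^sub>R x" "x \<noteq> 0" "B x x \<le> 0"
  shows "gen_eigenspace T m \<subseteq> TU"
proof -
  have "primary_comp T [:-m,1:] = gen_eigenspace T m"
    using comp_eq[of 1 m] by simp
  moreover have "irreducible [:-m,1:]" using lin_irr .
  moreover have "[:-m,1:] dvd charpoly T" using charpoly_root[OF linT assms(1,2)] .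
  moreover have "x \<in> primary_comp T [:-m,1:]"
    using eig_in_gen[OF assms(1)] calculation(1) by simp
  ultimately have "primary_comp T [:-m,1:] \<in> {primary_comp T p | p. irreducible p \<and> p dvd charpoly T \<and>
       \<not> (\<forall>v\<in>primary_comp T p. v \<noteq> 0 \<longrightarrow> B v v > 0)}"
    using assms(2,3) by (intro CollectI exI[of _ "[:-m,1:]"]) auto
  then have "primary_comp T [:-m,1:] \<subseteq> TU" by (rule Union_upper)
  then show ?thesis using \<open>primary_comp T [:-m,1:] = gen_eigenspace T m\<close> by simp
qed

lemma TP1:
  assumes x0: "x \<noteq> 0" and Tx: "T x = x" and xx: "B x x \<le> 0"
  shows "time_part B T = gen_eigenspace T 1"
proof
  have Tx1: "T x = 1 *\<^sub>R x" using Tx by simp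
  have "gen_eigenspace T 1 \<subseteq> TU" by (rule comp_in_TU[OF Tx1 x0 xx])
  then show "gen_eigenspace T 1 \<subseteq> time_part B T"
    unfolding tp_def' using span_superset[of TU] by (rule order_trans)
  have "TU \<subseteq> gen_eigenspace T 1"
  proof
    fix y assume "y \<in> TU"
    then obtain p where p: "irreducible p" "y \<in> primary_comp T p"
      "\<not> (\<forall>v\<in>primary_comp T p. v \<noteq> 0 \<longrightarrow> B v v > 0)" by (rule TU_E)
    show "y \<in> gen_eigenspace T 1"
    proof (cases "poly p 1 = 0")
      case True
      from irr_root[OF p(1) True] obtain c where c: "c \<noteq> 0" "p = smult c [:-1,1:]" by blast
      have "primary_comp T p = gen_eigenspace T 1" unfolding c(2) by (rule comp_eq[OF c(1)])
      with p(2) show ?thesis by simp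
    next
      case False
      have "\<forall>v\<in>primary_comp T p. v \<noteq> 0 \<longrightarrow> B v v > 0"
      proof (intro ballI impI)
        fix z assume z: "z \<in> primary_comp T p" "z \<noteq> 0"
        then have z0: "(poly_map p T ^^ CARD('n)) z = 0" unfolding primary_comp_def by simp
        have "B ((poly_map p T ^^ CARD('n)) z) x = (poly p 1) ^ CARD('n) * B z x"
          using pair_pm[OF Tx1] by simp
        then have zx: "B z x = 0" using z0 False by simp
        show "B z z > 0"
        proof (rule ccontr)
          assume "\<not> B z z > 0"
          then have "B z z \<le> 0" by simp
          from L5[OF x0 xx zx this] obtain c where c: "z = c *\<^sub>R x" by blast
          have "T z = 1 *\<^sub>R z" using c Tx by simp
          from act_pm[OF this, where p=p and k="CARD('n)"] z0 have "(poly p 1) ^ CARD('n) *\<^sub>R z = 0" by simp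
          with False z(2) show False by simp
        qed
      qed
      with p(3) show ?thesis by (rule notE)
    qed
  qed
  then show "time_part B T \<subseteq> gen_eigenspace T 1"
    unfolding tp_def' by (rule span_minimal[OF _ subspace_gen])
qed

lemma inv_ne: "a > 0 \<Longrightarrow> a \<noteq> 1 \<Longrightarrow> inverse a \<noteq> (a::real)"
proof
  assume a: "a > 0" "a \<noteq> 1" "inverse a = a"
  have "a * inverse a = 1" using a(1) by simp
  then have "a * a = 1" using a(3) by simp
  then have "(a - 1) * (a + 1) = 0" by (simp add: algebra_simps)
  then have "a - 1 = 0 \<or> a + 1 = 0" by (simp only: mult_eq_0_iff)
  with a(1,2) show False by auto
qed

lemma Pperp:
  assumes "B v v = 0" "B w w = 0" "B v w \<noteq> 0" "B z v = 0" "B z w = 0"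
  shows "z = 0 \<or> B z z > 0"
proof -
  define e where "e = v - B v w *\<^sub>R w"
  have wv: "B w v = B v w" using Bsym by metis
  have "B e e = - 2 * (B v w)^2" unfolding e_def using assms wv by (simp add: algebra_simps power2_eq_square)
  then have "B e e < 0" using assms(3) by simp
  moreover have "B z e = 0" unfolding e_def using assms by simp
  ultimately show ?thesis using L1 by blast
qed

lemma Vgen:
  assumes a: "a > 0" "a \<noteq> 1" and Tv: "T v = a *\<^sub>R v" and Tw: "T w = inverse a *\<^sub>R w"
    and vv: "B v v = 0" and ww: "B w w = 0" and vw: "B v w \<noteq> 0"
  shows "gen_eigenspace T a = span {v}"
proof
  have a0: "a \<noteq> 0" using a by simp
  have ia: "inverse a - a \<noteq> 0" using inv_ne[OF a] by simp
  have a2: "a * a \<noteq> 1" using inv_ne[OF a] a0 by (metis inverse_unique)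
  have kill: "((\<lambda>w. T w - a *\<^sub>R w) ^^ k) z = 0 \<Longrightarrow> B z v = 0 \<Longrightarrow> B z w = 0 \<Longrightarrow> z = 0" for k z
  proof (induction k arbitrary: z)
    case 0 then show ?case by simp
  next
    case (Suc k)
    let ?g = "\<lambda>w. T w - a *\<^sub>R w"
    have "(?g ^^ k) (?g z) = 0" using Suc.prems(1) by (simp add: funpow_Suc_right del: funpow.simps)
    moreover have "B (?g z) v = 0" using pair_T[OF Tv a0] Suc.prems by simp
    moreover have iaa: "inverse (inverse a) = a" by simp
    have "B (?g z) w = 0" using pair_T[OF Tw] a0 Suc.prems by simp
    ultimately have "?g z = 0" using Suc.IH by blast
    then have Tz: "T z = a *\<^sub>R z" by simp
    have "B z z = B (T z) (T z)" by simp
    also have "\<dots> = (a * a) * B z z" using Tz by simp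
    finally have "B z z = 0" using a2 by (metis mult_cancel_right1)
    with Pperp[OF vv ww vw Suc.prems(2,3)] show ?case by simp
  qed
  show "gen_eigenspace T a \<subseteq> span {v}"
  proof
    fix y assume "y \<in> gen_eigenspace T a"
    then have y0: "((\<lambda>w. T w - a *\<^sub>R w) ^^ CARD('n)) y = 0" unfolding gen_eigenspace_def by simp
    have "B (((\<lambda>w. T w - a *\<^sub>R w) ^^ CARD('n)) y) v = (inverse a - a) ^ CARD('n) * B y v"
      using pair_g[OF Tv a0] .
    then have yv: "B y v = 0" using y0 ia by simp
    define c where "c = B y w / B v w"
    define y' where "y' = y - c *\<^sub>R v"
    have "((\<lambda>w. T w - a *\<^sub>R w) ^^ CARD('n)) y' = 0"
      unfolding y'_def using y0 act_g[OF Tv, where c=a and k="CARD('n)"] cardpos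
      by (simp add: linear_diff[OF lin_gk] linear_cmul[OF lin_gk])
    moreover have "B y' v = 0" unfolding y'_def using yv vv by simp
    moreover have "B y' w = 0" unfolding y'_def c_def using vw by simp
    ultimately have "y' = 0" using kill by blast
    then have "y = c *\<^sub>R v" unfolding y'_def by simp
    moreover have "v \<in> span {v}" by (rule span_base) simp
    ultimately show "y \<in> span {v}" using span_scale by metis
  qed
  show "span {v} \<subseteq> gen_eigenspace T a"
    using span_minimal[OF _ subspace_gen] eig_in_gen[OF Tv] by blast
qed

lemma TP2:
  assumes a: "a > 0" "a \<noteq> 1" and Tv: "T v = a *\<^sub>R v" and Tw: "T w = inverse a *\<^sub>R w"
    and vv: "B v v = 0" and ww: "B w w = 0" and vw: "B v w \<noteq> 0"
  shows "time_part B T = span {v, w}"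
proof
  have a0: "a \<noteq> 0" using a by simp
  have v0: "v \<noteq> 0" and w0: "w \<noteq> 0" using vw by auto
  have wv: "B w v \<noteq> 0" using vw Bsym by metis
  have ia: "inverse a > 0" "inverse a \<noteq> 1" using a by auto
  have Tv': "T v = inverse (inverse a) *\<^sub>R v" using Tv by simp
  have G1: "gen_eigenspace T a = span {v}" using Vgen[OF a Tv Tw vv ww vw] .
  have G2: "gen_eigenspace T (inverse a) = span {w}" using Vgen[OF ia Tw Tv' ww vv wv] .
  have vle: "B v v \<le> 0" "B w w \<le> 0" using vv ww by simp_all
  have "v \<in> TU" by (rule subsetD[OF comp_in_TU[OF Tv v0 vle(1)] eig_in_gen[OF Tv]])
  moreover have "w \<in> TU" by (rule subsetD[OF comp_in_TU[OF Tw w0 vle(2)] eig_in_gen[OF Tw]])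
  ultimately have "{v, w} \<subseteq> TU" by simp
  then show "span {v, w} \<subseteq> time_part B T" unfolding tp_def' by (rule span_mono)
  have "TU \<subseteq> span {v, w}"
  proof
    fix y assume "y \<in> TU"
    then obtain p where p: "irreducible p" "y \<in> primary_comp T p"
      "\<not> (\<forall>v\<in>primary_comp T p. v \<noteq> 0 \<longrightarrow> B v v > 0)" by (rule TU_E)
    show "y \<in> span {v, w}"
    proof (cases "poly p a = 0")
      case True
      from irr_root[OF p(1) True] obtain c where c: "c \<noteq> 0" "p = smult c [:-a,1:]" by blast
      have "primary_comp T p = gen_eigenspace T a" unfolding c(2) by (rule comp_eq[OF c(1)])
      with p(2) G1 have "y \<in> span {v}" by simp
      then show ?thesis using span_mono[of "{v}" "{v,w}"] by blast
    next
      case F1: False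
      show ?thesis
      proof (cases "poly p (inverse a) = 0")
        case True
        from irr_root[OF p(1) True] obtain c where c: "c \<noteq> 0" "p = smult c [:-inverse a,1:]" by blast
        have "primary_comp T p = gen_eigenspace T (inverse a)" unfolding c(2) by (rule comp_eq[OF c(1)])
        with p(2) G2 have "y \<in> span {w}" by simp
        then show ?thesis using span_mono[of "{w}" "{v,w}"] by blast
      next
        case F2: False
        have "\<forall>z\<in>primary_comp T p. z \<noteq> 0 \<longrightarrow> B z z > 0"
        proof (intro ballI impI)
          fix z assume z: "z \<in> primary_comp T p" "z \<noteq> 0"
          then have z0: "(poly_map p T ^^ CARD('n)) z = 0" unfolding primary_comp_def by simp
          have "B ((poly_map p T ^^ CARD('n)) z) v = (poly p (inverse a)) ^ CARD('n) * B z v"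
            using pair_pm[OF Tv a0] .
          then have zv: "B z v = 0" using z0 F2 by simp
          have "B ((poly_map p T ^^ CARD('n)) z) w = (poly p (inverse (inverse a))) ^ CARD('n) * B z w"
            using pair_pm[OF Tw] a0 by simp
          then have zw: "B z w = 0" using z0 F1 by simp
          from Pperp[OF vv ww vw zv zw] z(2) show "B z z > 0" by simp
        qed
        with p(3) show ?thesis by (rule notE)
      qed
    qed
  qed
  then show "time_part B T \<subseteq> span {v, w}"
    unfolding tp_def' by (rule span_minimal[OF _ subspace_span])
qed

end

context lor begin

lemma contB:
  fixes f g :: "'a::t2_space \<Rightarrow> real^'n"
  shows "continuous_on S f \<Longrightarrow> continuous_on S g \<Longrightarrow> continuous_on S (\<lambda>x. B (f x) (g x))"
  by (rule bilinear_continuous_on_compose[OF _ _ bil])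

lemma norm_bound:
  assumes e: "B e e < 0"
  obtains m where "m > 0" "\<And>y. B y e = 0 \<Longrightarrow> B y y \<ge> m * (norm y)^2"
proof (cases "sphere 0 1 \<inter> {y. B y e = 0} = {}")
  case True
  have "B y y \<ge> 1 * (norm y)^2" if "B y e = 0" for y
  proof (cases "y = 0")
    case False
    then have "(1 / norm y) *\<^sub>R y \<in> sphere 0 1 \<inter> {y. B y e = 0}" using that by simp
    with True show ?thesis by blast
  qed simp
  then show ?thesis using that[of 1] by simp
next
  case False
  have K: "compact (sphere 0 1 \<inter> {y. B y e = 0})"
    by (rule compact_Int_closed[OF compact_sphere])
       (rule closed_Collect_eq[OF contB[OF continuous_on_id continuous_on_const] continuous_on_const])
  have "continuous_on (sphere 0 1 \<inter> {y. B y e = 0}) (\<lambda>y. B y y)"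
    by (rule contB[OF continuous_on_id continuous_on_id])
  from continuous_attains_inf[OF K False this] obtain z where
    z: "z \<in> sphere 0 1 \<inter> {y. B y e = 0}" "\<And>y. y \<in> sphere 0 1 \<inter> {y. B y e = 0} \<Longrightarrow> B z z \<le> B y y"
    by blast
  have z0: "z \<noteq> 0" using z(1) by auto
  have m: "B z z > 0" using L1[OF e] z(1) z0 by auto
  have "B y y \<ge> B z z * (norm y)^2" if "B y e = 0" for y
  proof (cases "y = 0")
    case False
    define u where "u = (1 / norm y) *\<^sub>R y"
    have "u \<in> sphere 0 1 \<inter> {y. B y e = 0}" unfolding u_def using that False by simp
    then have "B z z \<le> B u u" using z(2) by blast
    also have "B u u = B y y / (norm y)^2" unfolding u_def by (simp add: power2_eq_square)
    finally show ?thesis using False by (simp add: field_simps)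
  qed simp
  then show ?thesis using that m by blast
qed

end

context lorT begin

lemma contT: "continuous_on S T"
  by (rule linear_continuous_on) (simp add: linear_conv_bounded_linear[symmetric] linT)

lemma ori1:
  assumes e: "B e e < 0" and x: "B x x < 0" "B x e < 0"
  shows "B (T x) e < 0"
proof (rule ccontr)
  assume "\<not> ?thesis"
  then have ge: "B (T x) e \<ge> 0" by simp
  let ?C = "connected_component_set (time_cone B) x"
  have xC: "x \<in> time_cone B" using x unfolding time_cone_def by simp
  have TxC: "T x \<in> ?C" by (rule orient[OF xC])
  have xinC: "x \<in> ?C" using xC by simp
  have sub: "?C \<subseteq> time_cone B" by (rule connected_component_subset)
  have conn: "connected ((\<lambda>y. B y e) ` ?C)"
    by (rule connected_continuous_image[OF contB[OF continuous_on_id continuous_on_const]]) simp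
  have ci: "\<And>a b z. a \<in> (\<lambda>y. B y e) ` ?C \<Longrightarrow> b \<in> (\<lambda>y. B y e) ` ?C \<Longrightarrow> a \<le> z \<Longrightarrow> z \<le> b
     \<Longrightarrow> z \<in> (\<lambda>y. B y e) ` ?C"
    using conn unfolding connected_iff_interval by blast
  have m1: "B x e \<in> (\<lambda>y. B y e) ` ?C" using xinC by (rule imageI)
  have m2: "B (T x) e \<in> (\<lambda>y. B y e) ` ?C" using TxC by (rule imageI)
  have "0 \<in> (\<lambda>y. B y e) ` ?C" by (rule ci[OF m1 m2]) (use x(2) ge in auto)
  then obtain y where y0: "0 = B y e" "y \<in> ?C" by (rule imageE)
  then have y: "y \<in> ?C" "B y e = 0" by simp_all
  then have "B y y < 0" using sub unfolding time_cone_def by blast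
  with L1[OF e y(2)] show False by auto
qed

lemma ori2:
  assumes e: "B e e < 0" and x: "B x x \<le> 0" "B x e \<le> 0"
  shows "B (T x) e \<le> 0"
proof (rule ccontr)
  assume "\<not> ?thesis"
  then have d: "B (T x) e > 0" by simp
  define K where "K = \<bar>B (T e) e\<bar> + 1"
  define \<epsilon> where "\<epsilon> = B (T x) e / K"
  have K: "K > 0" unfolding K_def by simp
  have ep: "\<epsilon> > 0" unfolding \<epsilon>_def using d K by simp
  have ex: "B e x = B x e" using Bsym by metis
  have "B (x + \<epsilon> *\<^sub>R e) (x + \<epsilon> *\<^sub>R e) = B x x + 2 * \<epsilon> * B x e + \<epsilon> * \<epsilon> * B e e"
    using ex by (simp add: algebra_simps)
  moreover have "\<epsilon> * \<epsilon> * B e e < 0" using ep e by (simp add: mult_pos_neg)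
  moreover have "2 * \<epsilon> * B x e \<le> 0" using ep x(2) by (simp add: mult_nonneg_nonpos)
  ultimately have "B (x + \<epsilon> *\<^sub>R e) (x + \<epsilon> *\<^sub>R e) < 0" using x(1) by linarith
  moreover have "B (x + \<epsilon> *\<^sub>R e) e < 0" using x(2) ep e by (simp add: mult_pos_neg add_nonpos_neg)
  ultimately have "B (T (x + \<epsilon> *\<^sub>R e)) e < 0" by (rule ori1[OF e])
  then have lt: "B (T x) e + \<epsilon> * B (T e) e < 0" by simp
  have "\<epsilon> * \<bar>B (T e) e\<bar> < B (T x) e"
  proof -
    have "\<epsilon> * \<bar>B (T e) e\<bar> < \<epsilon> * K" using ep unfolding K_def by simp
    also have "\<epsilon> * K = B (T x) e" unfolding \<epsilon>_def using K by simp
    finally show ?thesis .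
  qed
  moreover have "- (\<epsilon> * \<bar>B (T e) e\<bar>) \<le> \<epsilon> * B (T e) e"
  proof -
    have "- \<bar>B (T e) e\<bar> \<le> B (T e) e" by simp
    then have "\<epsilon> * (- \<bar>B (T e) e\<bar>) \<le> \<epsilon> * B (T e) e" by (rule mult_left_mono) (use ep in simp)
    then show ?thesis by simp
  qed
  ultimately show False using lt by linarith
qed

lemma brouwer_eig:
  obtains x a where "x \<noteq> 0" "a > 0" "T x = a *\<^sub>R x" "B x x \<le> 0"
proof -
  obtain e where e: "B e e < 0" using timelike_exists by blast
  define S where "S = {x. B x x \<le> 0 \<and> B x e = -1}"
  define c where "c = - 1 / B e e"
  have c: "c > 0" unfolding c_def using e by (simp add: divide_neg_neg)
  have ce: "c * B e e = -1" unfolding c_def using e by simp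
  have Sne: "S \<noteq> {}"
  proof -
    have "c *\<^sub>R e \<in> S" unfolding S_def using ce e c by (simp add: mult_pos_neg mult_nonneg_nonpos)
    then show ?thesis by blast
  qed
  have xy: "B x y \<le> 0" if "x \<in> S" "y \<in> S" for x y
  proof -
    have "B (x - y) e = 0" using that unfolding S_def by simp
    from L1[OF e this] have "B (x - y) (x - y) \<ge> 0" by auto
    moreover have "B y x = B x y" using Bsym by metis
    ultimately have "B x x - 2 * B x y + B y y \<ge> 0" by (simp add: algebra_simps)
    with that show ?thesis unfolding S_def by simp
  qed
  have cvx: "convex S"
    unfolding convex_def
  proof (intro ballI allI impI)
    fix x y and u v :: real assume xy': "x \<in> S" "y \<in> S" and uv: "0 \<le> u" "0 \<le> v" "u + v = 1"
    have yx: "B y x = B x y" using Bsym by metis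
    have "B (u *\<^sub>R x + v *\<^sub>R y) (u *\<^sub>R x + v *\<^sub>R y) = u * u * B x x + 2 * u * v * B x y + v * v * B y y"
      using yx by (simp add: algebra_simps)
    moreover have "u * u * B x x \<le> 0" using xy' uv unfolding S_def by (simp add: mult_nonneg_nonpos)
    moreover have "2 * u * v * B x y \<le> 0" using xy[OF xy'] uv by (simp add: mult_nonneg_nonpos)
    moreover have "v * v * B y y \<le> 0" using xy' uv unfolding S_def by (simp add: mult_nonneg_nonpos)
    moreover have "B (u *\<^sub>R x + v *\<^sub>R y) e = - (u + v)" using xy' unfolding S_def by simp
    ultimately show "u *\<^sub>R x + v *\<^sub>R y \<in> S" unfolding S_def using uv by simp
  qed
  have clo: "closed S"
  proof -
    have "S = {x. B x x \<le> 0} \<inter> {x. B x e = -1}" unfolding S_def by auto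
    moreover have "closed {x. B x x \<le> 0}"
      by (rule closed_Collect_le[OF contB[OF continuous_on_id continuous_on_id] continuous_on_const])
    moreover have "closed {x. B x e = -1}"
      by (rule closed_Collect_eq[OF contB[OF continuous_on_id continuous_on_const] continuous_on_const])
    ultimately show ?thesis by auto
  qed
  obtain m where m: "m > 0" "\<And>y. B y e = 0 \<Longrightarrow> B y y \<ge> m * (norm y)^2"
    using norm_bound[OF e] by blast
  define M where "M = - (c * c * B e e)"
  have bnd: "bounded S"
  proof -
    have "norm x \<le> c * norm e + max 1 (M / m)" if "x \<in> S" for x
    proof -
      define y where "y = x - c *\<^sub>R e"
      have ye: "B y e = 0" unfolding y_def using that ce unfolding S_def by simp
      have ey: "B e y = 0" using ye Bsym by metis
      have "B x x = c * c * B e e + B y y"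
        unfolding y_def using ye ey by (simp add: algebra_simps y_def)
      then have "B y y \<le> M" using that unfolding S_def M_def by simp
      with m(2)[OF ye] have "m * (norm y)^2 \<le> M" by simp
      then have ny: "(norm y)^2 \<le> M / m" using m(1) by (simp add: field_simps)
      have "norm y \<le> max 1 (M / m)"
      proof (cases "norm y \<le> 1")
        case False
        then have "norm y * 1 \<le> norm y * norm y" by (intro mult_left_mono) auto
        then have "norm y \<le> (norm y)^2" by (simp add: power2_eq_square)
        with ny show ?thesis by simp
      qed simp
      moreover have "x = c *\<^sub>R e + y" unfolding y_def by simp
      then have "norm x \<le> norm (c *\<^sub>R e) + norm y"
        using norm_triangle_ineq[of "c *\<^sub>R e" y] by simp
      ultimately show ?thesis using c by simp
    qed
    then show ?thesis unfolding bounded_iff by blast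
  qed
  have cpt: "compact S" using bnd clo compact_eq_bounded_closed by blast
  have Tx0: "B (T x) e < 0" if "x \<in> S" for x
  proof -
    have "B (T x) e \<le> 0" by (rule ori2[OF e]) (use that in \<open>auto simp: S_def\<close>)
    moreover have "x \<noteq> 0" using that unfolding S_def by auto
    then have "T x \<noteq> 0" using injT by (metis Tzero injD)
    moreover have "B (T x) (T x) \<le> 0" using that unfolding S_def by simp
    ultimately show ?thesis using L1[OF e, of "T x"] by fastforce
  qed
  have Tx0': "\<forall>x\<in>S. B (T x) e \<noteq> 0" using Tx0 by (metis less_irrefl)
  define f where "f = (\<lambda>x. (- 1 / B (T x) e) *\<^sub>R T x)"
  have contf: "continuous_on S f"
    unfolding f_def
    by (intro continuous_on_scaleR continuous_on_divide continuous_on_const contT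
        contB[OF contT continuous_on_const] Tx0')
  have fS: "f \<in> S \<rightarrow> S"
  proof
    fix x assume x: "x \<in> S"
    have d: "B (T x) e < 0" using Tx0[OF x] .
    have "B (f x) e = -1" unfolding f_def using d by simp
    moreover have "B (f x) (f x) = (1 / B (T x) e)^2 * B x x"
      unfolding f_def by (simp add: power2_eq_square)
    then have "B (f x) (f x) \<le> 0" using x unfolding S_def by (simp add: mult_nonneg_nonpos)
    ultimately show "f x \<in> S" unfolding S_def by simp
  qed
  obtain x where x: "x \<in> S" "f x = x" using brouwer[OF cpt cvx Sne contf fS] by blast
  define a where "a = - B (T x) e"
  have a: "a > 0" unfolding a_def using Tx0[OF x(1)] by simp
  have "(- 1 / B (T x) e) *\<^sub>R T x = x" using x(2) unfolding f_def .
  then have "a *\<^sub>R ((- 1 / B (T x) e) *\<^sub>R T x) = a *\<^sub>R x" by simp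
  then have "T x = a *\<^sub>R x" unfolding a_def using Tx0[OF x(1)] by simp
  moreover have "x \<noteq> 0" using x(1) unfolding S_def by auto
  moreover have "B x x \<le> 0" using x(1) unfolding S_def by simp
  ultimately show ?thesis using that a by blast
qed

end

context lorT begin

lemma W_inv_g:
  assumes "subspace W" "T ` W \<subseteq> W" "z \<in> W"
  shows "((\<lambda>w. T w - m *\<^sub>R w) ^^ k) z \<in> W"
proof (induction k)
  case 0 then show ?case using assms(3) by simp
next
  case (Suc k)
  let ?y = "((\<lambda>w. T w - m *\<^sub>R w) ^^ k) z"
  have "T ?y \<in> W" using Suc assms(2) by blast
  moreover have "m *\<^sub>R ?y \<in> W" using Suc assms(1) by (rule subspace_scale[rotated])
  ultimately have "T ?y - m *\<^sub>R ?y \<in> W" using assms(1) by (rule subspace_diff[rotated 1])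
  then show ?case by simp
qed

lemma fixed_in_W:
  assumes W: "subspace W" "T ` W \<subseteq> W" "W \<subseteq> gen_eigenspace T 1" and z: "z \<in> W" "z \<noteq> 0"
  obtains u where "u \<in> W" "u \<noteq> 0" "T u = u"
proof -
  let ?g = "\<lambda>w. T w - 1 *\<^sub>R w"
  let ?P = "\<lambda>k. (?g ^^ k) z = 0"
  have Pn: "?P (CARD('n))" using W(3) z(1) unfolding gen_eigenspace_def by blast
  define k where "k = (LEAST k. ?P k)"
  have Pk: "?P k" using Pn unfolding k_def by (rule LeastI)
  have k0: "k \<noteq> 0" using Pk z(2) by (cases k) auto
  then have "k - 1 < k" by simp
  then have nP: "\<not> ?P (k - 1)" unfolding k_def by (rule not_less_Least)
  define u where "u = (?g ^^ (k - 1)) z"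
  have "?g u = (?g ^^ Suc (k - 1)) z" unfolding u_def by simp
  also have "Suc (k - 1) = k" using k0 by simp
  finally have "?g u = 0" using Pk by simp
  then have "T u = u" by simp
  moreover have "u \<in> W" unfolding u_def by (rule W_inv_g[OF W(1,2) z(1)])
  moreover have "u \<noteq> 0" using nP unfolding u_def by simp
  ultimately show ?thesis using that by blast
qed

lemma dim1: "(u::real^'n) \<noteq> 0 \<Longrightarrow> dim {u} = 1"
  using dim_insert[of u "{}"] by (simp add: span_empty dim_empty)

lemma span2_decomp:
  assumes "z \<in> span {u, w}"
  obtains \<alpha> \<beta> where "z = \<alpha> *\<^sub>R u + \<beta> *\<^sub>R w"
proof -
  obtain \<alpha> where "z - \<alpha> *\<^sub>R u \<in> span {w}" using assms span_breakdown_eq by blast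
  then obtain \<beta> where "z - \<alpha> *\<^sub>R u = \<beta> *\<^sub>R w" unfolding span_singleton by blast
  then have "z = \<alpha> *\<^sub>R u + \<beta> *\<^sub>R w" by (simp add: algebra_simps)
  then show ?thesis using that by blast
qed

lemma span1_mem: "y \<in> span {u} \<longleftrightarrow> (\<exists>c. y = c *\<^sub>R u)"
  unfolding span_singleton by blast

end

theorem theorem2p11:
  fixes B :: "real^'n \<Rightarrow> real^'n \<Rightarrow> real"
    and T :: "real^'n \<Rightarrow> real^'n"
    and W :: "(real^'n) set"
  assumes "lorentz_form B"
    and "T \<in> PO B"
    and "subspace W" and "W \<subseteq> time_part B T" and "T ` W \<subseteq> W" and "time_like B W"
    and "\<And>W'. subspace W' \<Longrightarrow> W' \<subseteq> W \<Longrightarrow> T ` W' \<subseteq> W' \<Longrightarrow> time_like B W' \<Longrightarrow> W' = W"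
  defines "C1 \<equiv> time_part B T = gen_eigenspace T 1 \<and> dim W = 1 \<and>
              (\<exists>v. B v v < 0 \<and> T v = v \<and> W = span {v})"
    and "C2 \<equiv> time_part B T = gen_eigenspace T 1 \<and> dim W \<ge> 2 \<and>
              (\<exists>v. light_like B v \<and> T v = v \<and> {w\<in>W. T w - w = 0} = span {v})"
    and "C3 \<equiv> (\<exists>l::real. l > 0 \<and> l \<noteq> 1 \<and>
              time_part B T = {x + y | x y. x \<in> gen_eigenspace T l \<and> y \<in> gen_eigenspace T (inverse l)} \<and>
              gen_eigenspace T l \<inter> gen_eigenspace T (inverse l) = {0} \<and>
              dim W = 2 \<and>
              (\<exists>u w. light_like B u \<and> light_like B w \<and> T u = l *\<^sub>R u \<and>
                     T w = inverse l *\<^sub>R w \<and> W = span {u, w}))"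
  shows "(C1 \<or> C2 \<or> C3) \<and> \<not> (C1 \<and> C2) \<and> \<not> (C1 \<and> C3) \<and> \<not> (C2 \<and> C3)"
proof -
  interpret L: lorT B T using assms(1,2) by (simp add: lorT_def lor_def lorT_axioms_def)
  note sW = assms(3) and WT = assms(4) and TW = assms(5) and tlW = assms(6) and minW = assms(7)
  have n12: "\<not> (C1 \<and> C2)" unfolding C1_def C2_def by auto
  have n13: "\<not> (C1 \<and> C3)" unfolding C1_def C3_def by auto
  have n23: "\<not> (C2 \<and> C3)"
  proof
    assume C: "C2 \<and> C3"
    from C obtain v where v: "light_like B v" "T v = v" "{w\<in>W. T w - w = 0} = span {v}"
      unfolding C2_def by blast
    from C obtain l u w where l: "l > 0" "l \<noteq> 1" "T u = l *\<^sub>R u" "T w = inverse l *\<^sub>R w"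
      "W = span {u, w}" unfolding C3_def by blast
    have "v \<in> span {v}" by (rule span_base) simp
    then have "v \<in> W" using v(3) by blast
    then obtain \<alpha> \<beta> where ab: "v = \<alpha> *\<^sub>R u + \<beta> *\<^sub>R w" using l(5) L.span2_decomp by metis
    define h where "h = (\<lambda>z. T (T z - l *\<^sub>R z) - inverse l *\<^sub>R (T z - l *\<^sub>R z))"
    have "h v = ((1 - l) * (1 - inverse l)) *\<^sub>R v" unfolding h_def using v(2) by (simp add: algebra_simps)
    moreover have "h v = 0" unfolding h_def ab using l(3,4) by (simp add: algebra_simps)
    moreover have "(1 - l) * (1 - inverse l) \<noteq> 0" using l(1,2) by (simp add: inverse_eq_iff_eq)
    ultimately have "v = 0" by simp
    with v(1) show False unfolding light_like_def by simp
  qed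
  have C123: "C1 \<or> C2 \<or> C3"
  proof (cases "\<exists>x. x \<noteq> 0 \<and> T x = x \<and> B x x \<le> 0")
    case True
    then obtain x where x: "x \<noteq> 0" "T x = x" "B x x \<le> 0" by blast
    have tp: "time_part B T = gen_eigenspace T 1" by (rule L.TP1[OF x])
    have WV1: "W \<subseteq> gen_eigenspace T 1" using WT tp by simp
    obtain z where z: "z \<in> W" "B z z < 0" using tlW unfolding time_like_def by blast
    have z0: "z \<noteq> 0" using z(2) by auto
    show ?thesis
    proof (cases "\<exists>u\<in>W. T u = u \<and> B u u < 0")
      case True
      then obtain u where u: "u \<in> W" "T u = u" "B u u < 0" by blast
      have u0: "u \<noteq> 0" using u(3) by auto
      have "span {u} = W"
      proof (rule minW)
        show "subspace (span {u})" by (rule subspace_span)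
        show "span {u} \<subseteq> W" using u(1) sW by (simp add: span_minimal)
        show "T ` span {u} \<subseteq> span {u}" using u(2) by (auto simp: span_singleton)
        have "u \<in> span {u}" by (rule span_base) simp
        then show "time_like B (span {u})" using u(3) unfolding time_like_def by blast
      qed
      moreover have "dim W = 1" using calculation L.dim1[OF u0] by (metis dim_span)
      ultimately have C1 unfolding C1_def using tp u by metis
      then show ?thesis by blast
    next
      case False
      have nopos: "B u u \<le> 0" if u: "u \<in> W" "T u = u" for u
      proof (rule ccontr)
        assume "\<not> B u u \<le> 0"
        then have up: "B u u > 0" by simp
        define W' where "W' = W \<inter> {y. B y u = 0}"
        have "W' = W"
        proof (rule minW)
          show "subspace W'" unfolding W'_def
            by (rule subspace_inter[OF sW subspace_ker[OF L.linB1]])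
          show "W' \<subseteq> W" unfolding W'_def by blast
          show "T ` W' \<subseteq> W'"
          proof
            fix y assume "y \<in> T ` W'"
            then obtain y0 where y0: "y0 \<in> W'" "y = T y0" by blast
            have "B (T y0) (T u) = B y0 u" by simp
            then have "B y u = 0" using y0 u(2) unfolding W'_def by simp
            moreover have "y \<in> W" using y0 TW unfolding W'_def by blast
            ultimately show "y \<in> W'" unfolding W'_def by simp
          qed
          define z' where "z' = z - (B z u / B u u) *\<^sub>R u"
          have "z' \<in> W" unfolding z'_def using sW z(1) u(1) by (simp add: subspace_diff subspace_scale)
          moreover have "B z' u = 0" unfolding z'_def using up by simp
          moreover have "B z' z' = B z z - (B z u)^2 / B u u"
            unfolding z'_def using up L.Bsym[of u z] by (simp add: algebra_simps power2_eq_square)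
          moreover have "(B z u)^2 / B u u \<ge> 0" using up by simp
          ultimately show "time_like B W'" unfolding time_like_def W'_def using z(2)
            by (intro bexI[of _ z']) auto
        qed
        then have "u \<in> W'" using u(1) by simp
        then show False using up unfolding W'_def by simp
      qed
      then have iso0: "B u u = 0" if "u \<in> W" "T u = u" for u
        using False that by (meson linorder_neqE_linordered_idom not_le)
      obtain u0 where u0: "u0 \<in> W" "u0 \<noteq> 0" "T u0 = u0"
        using L.fixed_in_W[OF sW TW WV1 z(1) z0] by blast
      have u00: "B u0 u0 = 0" using iso0 u0 by blast
      have F: "{w\<in>W. T w - w = 0} = span {u0}"
      proof
        show "span {u0} \<subseteq> {w\<in>W. T w - w = 0}"
        proof
          fix y assume "y \<in> span {u0}"
          then obtain c where c: "y = c *\<^sub>R u0" using L.span1_mem by blast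
          then have "y \<in> W" using sW u0(1) by (simp add: subspace_scale)
          moreover have "T y - y = 0" using c u0(3) by simp
          ultimately show "y \<in> {w\<in>W. T w - w = 0}" by simp
        qed
        show "{w\<in>W. T w - w = 0} \<subseteq> span {u0}"
        proof
          fix y assume "y \<in> {w\<in>W. T w - w = 0}"
          then have y: "y \<in> W" "T y = y" by auto
          have yy: "B y y = 0" using iso0 y by blast
          have "y + u0 \<in> W" using y(1) u0(1) sW by (simp add: subspace_add)
          moreover have "T (y + u0) = y + u0" using y u0 by simp
          ultimately have "B (y + u0) (y + u0) = 0" using iso0 by blast
          then have "B y u0 = 0" using yy u00 L.Bsym[of u0 y] by simp
          from L.L2[OF yy u00 this u0(2)] obtain c where "y = c *\<^sub>R u0" by blast
          then show "y \<in> span {u0}" using L.span1_mem by blast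
        qed
      qed
      have "z \<notin> span {u0}"
      proof
        assume "z \<in> span {u0}"
        then obtain c where "z = c *\<^sub>R u0" using L.span1_mem by blast
        then have "B z z = 0" using u00 by simp
        with z(2) show False by simp
      qed
      then have "dim {z, u0} = 2" using dim_insert[of z "{u0}"] L.dim1[OF u0(2)] by simp
      moreover have "dim {z, u0} \<le> dim W" using z(1) u0(1) by (intro dim_subset) simp
      ultimately have "dim W \<ge> 2" by simp
      moreover have "light_like B u0" unfolding light_like_def using u0 u00 by simp
      ultimately have C2 unfolding C2_def using tp u0(3) F by blast
      then show ?thesis by blast
    qed
  next
    case False
    obtain x a where x: "x \<noteq> 0" "a > 0" "T x = a *\<^sub>R x" "B x x \<le> 0" by (rule L.brouwer_eig)
    have a1: "a \<noteq> 1" using False x by auto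
    have a0: "a \<noteq> 0" using x(2) by simp
    have ia: "inverse a \<noteq> a" using L.inv_ne[OF x(2) a1] .
    have "B x x = B (T x) (T x)" by simp
    also have "\<dots> = (a * a) * B x x" using x(3) by simp
    finally have "(a * a - 1) * B x x = 0" by (simp add: algebra_simps)
    moreover have "a * a \<noteq> 1" using ia inverse_unique[of a a] by auto
    ultimately have xx: "B x x = 0" by simp
    let ?f = "\<lambda>y. T y - inverse a *\<^sub>R y"
    have "\<not> inj ?f"
    proof
      assume "inj ?f"
      then have "surj ?f" using linear_injective_imp_surjective[OF L.lin_g, of "inverse a"] by simp
      obtain y0 where y0: "B x y0 \<noteq> 0" using L.nondeg[OF x(1)] by blast
      from \<open>surj ?f\<close> obtain y' where "y0 = ?f y'" by (rule surjE)
      then have "B y0 x = 0" using L.pair_T[OF x(3) a0] by simp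
      with y0 L.Bsym[of x y0] show False by simp
    qed
    then obtain w1 w2 where w12: "w1 \<noteq> w2" "?f w1 = ?f w2" unfolding inj_on_def by blast
    define w where "w = w1 - w2"
    have w0: "w \<noteq> 0" unfolding w_def using w12 by simp
    have Tw: "T w = inverse a *\<^sub>R w" unfolding w_def using w12(2) by (simp add: algebra_simps)
    have "B w w = B (T w) (T w)" by simp
    also have "\<dots> = (inverse a * inverse a) * B w w" using Tw by simp
    finally have "(inverse a * inverse a - 1) * B w w = 0" by (simp add: algebra_simps)
    moreover have "inverse a * inverse a \<noteq> 1" using \<open>a * a \<noteq> 1\<close>
      by (metis inverse_mult_distrib inverse_1 inverse_inverse_eq)
    ultimately have ww: "B w w = 0" by simp
    have xw: "B x w \<noteq> 0"
    proof
      assume "B x w = 0"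
      from L.L2[OF xx ww this w0] obtain c where c: "x = c *\<^sub>R w" by blast
      then have Tx2: "T x = inverse a *\<^sub>R x" using Tw by simp
      have "a *\<^sub>R x = inverse a *\<^sub>R x" using x(3) Tx2 by metis
      then have "(a - inverse a) *\<^sub>R x = 0" by (simp add: scaleR_diff_left)
      with x(1) have "a - inverse a = 0" by simp
      with ia show False by simp
    qed
    have wx: "B w x = B x w" using L.Bsym by metis
    have tp: "time_part B T = span {x, w}" by (rule L.TP2[OF x(2) a1 x(3) Tw xx ww xw])
    obtain z where z: "z \<in> W" "B z z < 0" using tlW unfolding time_like_def by blast
    have "z \<in> span {x, w}" using z(1) WT tp by blast
    then obtain \<alpha> \<beta> where zab: "z = \<alpha> *\<^sub>R x + \<beta> *\<^sub>R w" by (rule L.span2_decomp)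
    have "B z z = 2 * \<alpha> * \<beta> * B x w" unfolding zab using xx ww wx by (simp add: algebra_simps)
    then have ab: "\<alpha> \<noteq> 0" "\<beta> \<noteq> 0" using z(2) by auto
    have Tz: "T z \<in> W" using z(1) TW by blast
    have "T z - inverse a *\<^sub>R z = (\<alpha> * (a - inverse a)) *\<^sub>R x"
      unfolding zab using x(3) Tw by (simp add: algebra_simps)
    moreover have "T z - inverse a *\<^sub>R z \<in> W" using Tz z(1) sW by (simp add: subspace_diff subspace_scale)
    ultimately have "(\<alpha> * (a - inverse a)) *\<^sub>R x \<in> W" by simp
    then have "inverse (\<alpha> * (a - inverse a)) *\<^sub>R ((\<alpha> * (a - inverse a)) *\<^sub>R x) \<in> W"
      by (rule subspace_scale[OF sW])
    moreover have "inverse (\<alpha> * (a - inverse a)) * (\<alpha> * (a - inverse a)) = 1"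
      by (rule left_inverse) (use ab ia in simp)
    ultimately have xW: "x \<in> W" by (simp only: scaleR_scaleR scaleR_one)
    have "T z - a *\<^sub>R z = (\<beta> * (inverse a - a)) *\<^sub>R w"
      unfolding zab using x(3) Tw by (simp add: algebra_simps)
    moreover have "T z - a *\<^sub>R z \<in> W" using Tz z(1) sW by (simp add: subspace_diff subspace_scale)
    ultimately have "(\<beta> * (inverse a - a)) *\<^sub>R w \<in> W" by simp
    then have "inverse (\<beta> * (inverse a - a)) *\<^sub>R ((\<beta> * (inverse a - a)) *\<^sub>R w) \<in> W"
      by (rule subspace_scale[OF sW])
    moreover have "inverse (\<beta> * (inverse a - a)) * (\<beta> * (inverse a - a)) = 1"
      by (rule left_inverse) (use ab ia in simp)
    ultimately have wW: "w \<in> W" by (simp only: scaleR_scaleR scaleR_one)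
    have Weq: "W = span {x, w}"
    proof
      show "W \<subseteq> span {x, w}" using WT tp by simp
      show "span {x, w} \<subseteq> W" using xW wW sW by (simp add: span_minimal)
    qed
    have xnw: "x \<notin> span {w}"
    proof
      assume "x \<in> span {w}"
      then obtain c where "x = c *\<^sub>R w" using L.span1_mem by blast
      then have "B x w = 0" using ww by simp
      with xw show False by simp
    qed
    have dW: "dim W = 2" unfolding Weq dim_span using dim_insert[of x "{w}"] xnw L.dim1[OF w0] by simp
    have iaa: "inverse a > 0" "inverse a \<noteq> 1" using x(2) a1 by auto
    have Tx': "T x = inverse (inverse a) *\<^sub>R x" using x(3) by simp
    have G1: "gen_eigenspace T a = span {x}" by (rule L.Vgen[OF x(2) a1 x(3) Tw xx ww xw])
    have G2: "gen_eigenspace T (inverse a) = span {w}"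
      by (rule L.Vgen[OF iaa Tw Tx' ww xx]) (use wx xw in simp)
    have tp2: "time_part B T = {p + q | p q. p \<in> gen_eigenspace T a \<and> q \<in> gen_eigenspace T (inverse a)}"
    proof -
      have e: "{x, w} = {x} \<union> {w}" by auto
      show ?thesis unfolding tp G1 G2 e by (rule span_Un)
    qed
    have int: "gen_eigenspace T a \<inter> gen_eigenspace T (inverse a) = {0}"
    proof
      show "gen_eigenspace T a \<inter> gen_eigenspace T (inverse a) \<subseteq> {0}"
      proof
        fix y assume "y \<in> gen_eigenspace T a \<inter> gen_eigenspace T (inverse a)"
        then have "y \<in> span {x}" "y \<in> span {w}" unfolding G1 G2 by auto
        then obtain c d where cd: "y = c *\<^sub>R x" "y = d *\<^sub>R w" unfolding L.span1_mem by blast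
        then have "B y x = 0" using xx by simp
        then have "d * B w x = 0" using cd(2) by simp
        then have "d = 0" using wx xw by simp
        then show "y \<in> {0}" using cd by simp
      qed
      show "{0} \<subseteq> gen_eigenspace T a \<inter> gen_eigenspace T (inverse a)"
        using subspace_0[OF L.subspace_gen] by simp
    qed
    have "light_like B x" "light_like B w" unfolding light_like_def using x(1) xx w0 ww by simp_all
    then have C3 unfolding C3_def using x(2) a1 tp2 int dW x(3) Tw Weq by blast
    then show ?thesis by blast
  qed
  show ?thesis using C123 n12 n13 n23 by blast
qed
end
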